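(* For every integer $k\ge1$, every $d\in\mathbb N$ and every $j\in\{1,2,3,4\}$, $$G_j(k,d)=\Big(\frac{\sqrt2}{3}\Big)^k\Big(\frac1{\sqrt2}\Big)^d\frac1{k!}\,\partial_x^k\big[g_j(x)\,z_-(\mu(x))^d\big]_{x=0}.$$
   Context: Let $\mathcal B$ be the $2$-regular Bethe lattice: the infinite tree in which every node has exactly $3$ neighbours, viewed as a metric graph with each edge isometric to $]0,1[$; $\mathrm{dist}$ is the path-length distance, $m(B)$ the midpoint of edge $B$. Each edge has two orientations; $-\vec B$ is the opposite of $\vec B$; write $\vec A\to\vec B$ when the terminal node of $\vec A$ is the initial node of $\vec B$. Define the matrix $G(1)$ indexed by oriented edges by $G(1,\vec B,\vec A)=-1/3$ if $\vec B=-\vec A$, $2/3$ if $\vec A\to\vec B$ and $\vec B\ne-\vec A$, $0$ otherwise, and $G(k)=G(1)^k$; $G(k,\vec B,\vec A)$ is the coefficient, at integer time $k$, of the Dirac mass propagating along $\vec B$ in the solution of the wave equation on $\mathcal B$ (speed $1$, Kirchhoff conditions at nodes) whose initial datum is a unit Dirac mass at $m(A)$ propagating along $\vec A$. Types of a pair $(\vec A,\vec B)$ with $d=\mathrm{dist}(m(A),m(B))\ge1$: say $\vec A$ points toward $B$ if the terminal node of $\vec A$ lies on the geodesic from $m(A)$ to $m(B)$, and $\vec B$ points away from $A$ if the initial node of $\vec B$ lies on that geodesic. Type 1: $\vec A$ toward $B$, $\vec B$ away from $A$; type 2: $\vec A$ toward $B$, $\vec B$ toward $A$; type 3: $\vec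 A$ away from $B$, $\vec B$ toward $A$; type 4: $\vec A$ away from $B$, $\vec B$ away from $A$. For $d=0$, types 1 and 3 mean $\vec B=\vec A$ and types 2 and 4 mean $\vec B=-\vec A$. $G_j(k,d)$ denotes $G(k,\vec B,\vec A)$ for any pair of type $j$ at distance $d$ (it depends only on $j,k,d$). Let $r=\sqrt2/3$, $\mu(x)=2x/(1+x^2/r^2)$, $z_-(\mu)=\frac1{2\mu}(1-\sqrt{1-4\mu^2})$ (principal branch, $z_-(0)=0$). With $z=z_-(\mu(x))$ and $D(x)=(1-\frac52xz)^2-\frac{x^2}2z^4$: $g_1=\frac{z}{2x}\frac{(1-2xz)(1-\frac52xz+\frac{x^2}2z^2)}{D}$ (extended by continuity at $0$), $g_2=-\frac{z}{2\sqrt2}\frac{1-\frac52xz+\frac{x^2}2z^2}{D}$, $g_3=\frac{xz}4\frac{1-\frac52xz+z^2}{D}$, $g_4=-\frac{z}{2\sqrt2}\frac{(1-2xz)(1-\frac52xz+z^2)}{D}$, all holomorphic near $x=0$. *)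

theory Defs
  imports "HOL-Analysis.Analysis"
begin

text \<open>Nodes: reduced words over the alphabet {0,1,2} (no two consecutive letters equal),
  i.e. elements of the free product Z2*Z2*Z2; two nodes are adjacent iff one is obtained
  from the other by prepending one letter.  This is the 3-regular tree.\<close>

definition bnodes :: "nat list set" where
  "bnodes = {w. set w \<subseteq> {0,1,2} \<and> successively (\<noteq>) w}"

definition badj :: "nat list \<Rightarrow> nat list \<Rightarrow> bool" where
  "badj u v \<longleftrightarrow> u \<in> bnodes \<and> v \<in> bnodes \<and> (\<exists>i. v = i # u \<or> u = i # v)"

definition oedges :: "(nat list \<times> nat list) set" where
  "oedges = {(u,v). badj u v}"

definition orev :: "nat list \<times> nat list \<Rightarrow> nat list \<times> nat list" where
  "orev A = (snd A, fst A)"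

definition follows :: "nat list \<times> nat list \<Rightarrow> nat list \<times> nat list \<Rightarrow> bool" (infix "\<leadsto>" 50) where
  "A \<leadsto> B \<longleftrightarrow> snd A = fst B"

definition ndist :: "nat list \<Rightarrow> nat list \<Rightarrow> nat" where
  "ndist u v = (LEAST n. (u, v) \<in> ({(a,b). badj a b} ^^ n))"

text \<open>Metric-graph distance from a node x to the midpoint of the edge A, minus 1/2.\<close>
definition edist :: "nat list \<Rightarrow> nat list \<times> nat list \<Rightarrow> nat" where
  "edist x A = min (ndist x (fst A)) (ndist x (snd A))"

definition same_edge :: "nat list \<times> nat list \<Rightarrow> nat list \<times> nat list \<Rightarrow> bool" where
  "same_edge A B \<longleftrightarrow> {fst A, snd A} = {fst B, snd B}"

text \<open>dist(m(A), m(B)) in the metric graph (an integer).\<close>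
definition middist :: "nat list \<times> nat list \<Rightarrow> nat list \<times> nat list \<Rightarrow> nat" where
  "middist A B = (if same_edge A B then 0 else 1 + min (edist (fst A) B) (edist (snd A) B))"

text \<open>The node x lies on the geodesic from m(A) to m(B):
  dist(m(A),x) + dist(x,m(B)) = dist(m(A),m(B)), where dist(m(A),x) = 1/2 + edist x A.\<close>
definition on_geod :: "nat list \<Rightarrow> nat list \<times> nat list \<Rightarrow> nat list \<times> nat list \<Rightarrow> bool" where
  "on_geod x A B \<longleftrightarrow> real (edist x A) + 1/2 + (real (edist x B) + 1/2) = real (middist A B)"

definition pair_type :: "nat \<Rightarrow> nat list \<times> nat list \<Rightarrow> nat list \<times> nat list \<Rightarrow> bool" where
  "pair_type j A B \<longleftrightarrow>
    (if middist A B = 0 then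
       ((j = 1 \<or> j = 3) \<and> B = A) \<or> ((j = 2 \<or> j = 4) \<and> B = orev A)
     else
       (j = 1 \<and> on_geod (snd A) A B \<and> on_geod (fst B) A B) \<or>
       (j = 2 \<and> on_geod (snd A) A B \<and> on_geod (snd B) A B) \<or>
       (j = 3 \<and> on_geod (fst A) A B \<and> on_geod (snd B) A B) \<or>
       (j = 4 \<and> on_geod (fst A) A B \<and> on_geod (fst B) A B))"

definition G1 :: "nat list \<times> nat list \<Rightarrow> nat list \<times> nat list \<Rightarrow> real" where
  "G1 B A = (if B = orev A then -1/3 else if A \<leadsto> B then 2/3 else 0)"

fun Gk :: "nat \<Rightarrow> nat list \<times> nat list \<Rightarrow> nat list \<times> nat list \<Rightarrow> real" where
  "Gk 0 B A = (if B = A then 1 else 0)"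
| "Gk (Suc k) B A = (\<Sum>\<^sub>\<infinity>C\<in>oedges. G1 B C * Gk k C A)"

definition rr :: real where "rr = sqrt 2 / 3"

definition mu :: "complex \<Rightarrow> complex" where
  "mu x = 2 * x / (1 + x^2 / (complex_of_real rr)^2)"

definition zminus :: "complex \<Rightarrow> complex" where
  "zminus m = (if m = 0 then 0 else (1 - csqrt (1 - 4 * m^2)) / (2 * m))"

definition Zf :: "complex \<Rightarrow> complex" where
  "Zf x = zminus (mu x)"

definition Dd :: "complex \<Rightarrow> complex" where
  "Dd x = (1 - 5/2 * x * Zf x)^2 - x^2 / 2 * (Zf x)^4"

definition g1raw :: "complex \<Rightarrow> complex" where
  "g1raw x = Zf x / (2 * x) * ((1 - 2 * x * Zf x) * (1 - 5/2 * x * Zf x + x^2/2 * (Zf x)^2)) / Dd x"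

definition g1 :: "complex \<Rightarrow> complex" where
  "g1 x = (if x = 0 then Lim (at 0) g1raw else g1raw x)"

definition g2 :: "complex \<Rightarrow> complex" where
  "g2 x = - (Zf x / (2 * complex_of_real (sqrt 2))) * (1 - 5/2 * x * Zf x + x^2/2 * (Zf x)^2) / Dd x"

definition g3 :: "complex \<Rightarrow> complex" where
  "g3 x = x * Zf x / 4 * (1 - 5/2 * x * Zf x + (Zf x)^2) / Dd x"

definition g4 :: "complex \<Rightarrow> complex" where
  "g4 x = - (Zf x / (2 * complex_of_real (sqrt 2))) * ((1 - 2 * x * Zf x) * (1 - 5/2 * x * Zf x + (Zf x)^2)) / Dd x"

definition gfun :: "nat \<Rightarrow> complex \<Rightarrow> complex" where
  "gfun j = (if j = 1 then g1 else if j = 2 then g2 else if j = 3 then g3 else g4)"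

end

theory Submission
  imports Defs "HOL-Complex_Analysis.Complex_Analysis"
begin


fun lcp :: "nat list \<Rightarrow> nat list \<Rightarrow> nat" where
  "lcp (x#xs) (y#ys) = (if x = y then Suc (lcp xs ys) else 0)"
| "lcp _ _ = 0"

lemma lcp_le1: "lcp xs ys \<le> length xs" by (induction xs ys rule: lcp.induct) auto
lemma lcp_le2: "lcp xs ys \<le> length ys" by (induction xs ys rule: lcp.induct) auto
lemma lcp_sym: "lcp xs ys = lcp ys xs"
  by (induction xs ys rule: lcp.induct) (auto elim: lcp.elims)
lemma lcp_self: "lcp xs xs = length xs" by (induction xs) auto
lemma lcp_eq: "lcp xs ys = length xs \<Longrightarrow> length xs = length ys \<Longrightarrow> xs = ys"
  by (induction xs ys rule: lcp.induct) (auto split: if_splits)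
lemma lcp_nth: "lcp xs ys = length xs \<Longrightarrow> j < length xs \<Longrightarrow> ys ! j = xs ! j"
proof (induction xs ys arbitrary: j rule: lcp.induct)
  case (1 x xs y ys) then show ?case by (cases j) (auto split: if_splits)
qed auto
lemma lcp_snoc: "lcp (xs @ [i]) ys = (if lcp xs ys = length xs \<and> length xs < length ys \<and> ys ! length xs = i
   then Suc (length xs) else lcp xs ys)"
proof (induction xs arbitrary: ys)
  case Nil then show ?case by (cases ys) auto
next
  case (Cons a xs) then show ?case by (cases ys) auto
qed

definition T :: "nat list \<Rightarrow> nat list \<Rightarrow> nat" where
  "T u v = length u + length v - 2 * lcp (rev u) (rev v)"

lemma T_sym: "T u v = T v u" unfolding T_def by (simp add: lcp_sym add.commute)
lemma T_self[simp]: "T u u = 0" unfolding T_def by (simp add: lcp_self)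
lemma T_zero: "T u v = 0 \<Longrightarrow> u = v"
proof -
  assume "T u v = 0"
  moreover have "lcp (rev u) (rev v) \<le> length u" "lcp (rev u) (rev v) \<le> length v"
    using lcp_le1[of "rev u" "rev v"] lcp_le2[of "rev u" "rev v"] by auto
  ultimately have "lcp (rev u) (rev v) = length (rev u)" "length (rev u) = length (rev v)"
    unfolding T_def by auto
  then show "u = v" using lcp_eq by fastforce
qed

definition cnd :: "nat \<Rightarrow> nat list \<Rightarrow> nat list \<Rightarrow> bool" where
  "cnd i v x \<longleftrightarrow> lcp (rev v) (rev x) = length v \<and> length v < length x \<and> rev x ! length v = i"

lemma T_Cons: "T x (i#v) = (if cnd i v x then T x v - 1 else T x v + 1)"
  and T_Cons_pos: "cnd i v x \<Longrightarrow> T x v \<ge> 1"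
proof -
  have l1: "lcp (rev v) (rev x) \<le> length v" "lcp (rev v) (rev x) \<le> length x"
    using lcp_le1[of "rev v" "rev x"] lcp_le2[of "rev v" "rev x"] by auto
  have e: "T x (i#v) = length x + Suc (length v) - 2 * lcp (rev v @ [i]) (rev x)"
    unfolding T_def by (simp add: lcp_sym)
  have e2: "T x v = length x + length v - 2 * lcp (rev v) (rev x)"
    unfolding T_def by (simp add: lcp_sym)
  show "T x (i#v) = (if cnd i v x then T x v - 1 else T x v + 1)"
    unfolding e e2 lcp_snoc cnd_def using l1 by auto
  show "cnd i v x \<Longrightarrow> T x v \<ge> 1" unfolding e2 cnd_def using l1 by auto
qed

lemma T_Cons_dn: "cnd i v x \<Longrightarrow> T x (i#v) + 1 = T x v"
  using T_Cons T_Cons_pos by fastforce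
lemma T_Cons_up: "\<not> cnd i v x \<Longrightarrow> T x (i#v) = T x v + 1"
  using T_Cons by simp

lemma badj_sym: "badj a b \<Longrightarrow> badj b a" unfolding badj_def by auto
lemma badj_nodes: "badj a b \<Longrightarrow> a \<in> bnodes \<and> b \<in> bnodes" unfolding badj_def by auto

lemma badj_T: "badj a b \<Longrightarrow> T x a = T x b + 1 \<or> T x b = T x a + 1"
  unfolding badj_def
  by (metis T_Cons_dn T_Cons_up)

lemma badj_T1: "badj a b \<Longrightarrow> T a b = 1"
  using badj_T[of a b a] by auto

lemma bnodes_tl: "v \<in> bnodes \<Longrightarrow> tl v \<in> bnodes"
  unfolding bnodes_def by (cases v) (auto simp: successively_Cons)

lemma toward_exists:
  assumes v: "v \<in> bnodes" and x: "x \<in> bnodes" and ne: "x \<noteq> v"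
  shows "\<exists>w. badj v w \<and> T x w + 1 = T x v"
proof (cases "lcp (rev v) (rev x) < length v")
  case True
  then obtain h w where vw: "v = h # w" by (cases v) auto
  have "\<not> cnd h w x"
  proof
    assume "cnd h w x"
    then have "lcp (rev v) (rev x) = length v" unfolding vw cnd_def by (simp add: lcp_snoc)
    with True show False by simp
  qed
  then have "T x v = T x w + 1" unfolding vw by (rule T_Cons_up)
  moreover have "badj v w" unfolding badj_def using v bnodes_tl[OF v] vw by auto
  ultimately show ?thesis by auto
next
  case False
  then have l: "lcp (rev v) (rev x) = length v" using lcp_le1[of "rev v" "rev x"] by auto
  have lt: "length v < length x"
  proof (rule ccontr)
    assume "\<not> length v < length x"
    moreover have "length v \<le> length x" using l lcp_le2[of "rev v" "rev x"] by auto
    ultimately have "length (rev v) = length (rev x)" by simp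
    then have "rev v = rev x" by (intro lcp_eq) (use l in auto)
    then show False using ne by simp
  qed
  define i where "i = rev x ! length v"
  have c: "cnd i v x" unfolding cnd_def i_def using l lt by simp
  have ne_sym: "(\<lambda>a b. b \<noteq> a) = ((\<noteq>)::nat\<Rightarrow>nat\<Rightarrow>bool)" by (auto intro!: ext)
  have sx: "successively (\<noteq>) (rev x)" using x unfolding bnodes_def successively_rev ne_sym by auto
  have ix: "i \<in> {0,1,2}"
  proof -
    have "i \<in> set (rev x)" using nth_mem[of "length v" "rev x"] lt unfolding i_def by simp
    then show ?thesis using x unfolding bnodes_def by auto
  qed
  have "i # v \<in> bnodes"
  proof -
    have "successively (\<noteq>) (i # v)"
    proof (cases v)
      case Nil then show ?thesis by simp
    next
      case (Cons h t)
      have hv: "rev v ! (length v - 1) = h" using Cons by (simp add: nth_append)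
      have "rev v ! (length v - 1) = rev x ! (length v - 1)"
        using lcp_nth[of "rev v" "rev x" "length v - 1"] l Cons by simp
      moreover have "rev x ! (length v - 1) \<noteq> rev x ! Suc (length v - 1)"
        using successively_nth[OF sx, of "length v - 1"] lt Cons by simp
      ultimately have h1: "h \<noteq> rev x ! Suc (length v - 1)" using hv by auto
      have "Suc (length v - 1) = length v" using Cons by simp
      then have "i \<noteq> h" using h1 unfolding i_def by auto
      then show ?thesis using v Cons unfolding bnodes_def by (simp add: successively_Cons)
    qed
    then show ?thesis using v ix unfolding bnodes_def by auto
  qed
  then have "badj v (i # v)" unfolding badj_def using v by auto
  moreover have "T x (i#v) + 1 = T x v" using T_Cons_dn[OF c] .
  ultimately show ?thesis by blast
qed

lemma toward_unique:
  assumes "badj v w1" "badj v w2" "T x w1 < T x v" "T x w2 < T x v"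
  shows "w1 = w2"
proof -
  have ch: "(\<exists>i. w = i # v \<and> cnd i v x) \<or> (\<exists>h. v = h # w \<and> \<not> cnd h w x)"
    if "badj v w" "T x w < T x v" for w
  proof -
    from that(1) obtain i where "w = i # v \<or> v = i # w" unfolding badj_def by auto
    then show ?thesis
    proof
      assume "w = i # v"
      then show ?thesis using that(2) T_Cons_up[of i v x] by auto
    next
      assume "v = i # w"
      then show ?thesis using that(2) T_Cons_dn[of i w x] by auto
    qed
  qed
  have nopar: False if "cnd i v x" "v = h # w" "\<not> cnd h w x" for i h w
  proof -
    have "lcp (rev w @ [h]) (rev x) = Suc (length w)" using that(1,2) unfolding cnd_def by simp
    then have "cnd h w x" unfolding lcp_snoc cnd_def
      using lcp_le1[of "rev w" "rev x"] by (auto split: if_splits)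
    with that(3) show False by simp
  qed
  show ?thesis
    using ch[OF assms(1,3)] ch[OF assms(2,4)] nopar unfolding cnd_def by blast
qed

abbreviation "RR \<equiv> {(a,b). badj a b}"

lemma relpow_T: "(u,v) \<in> RR ^^ n \<Longrightarrow> T u v \<le> n"
proof (induction n arbitrary: v)
  case 0 then show ?case by simp
next
  case (Suc n)
  then obtain y where "(u,y) \<in> RR ^^ n" "badj y v" by auto
  then show ?case using Suc.IH badj_T[of y v u] by force
qed

lemma T_relpow: "u \<in> bnodes \<Longrightarrow> v \<in> bnodes \<Longrightarrow> (u,v) \<in> RR ^^ (T u v)"
proof (induction "T u v" arbitrary: v)
  case 0 then show ?case using T_zero by force
next
  case (Suc m)
  then have "u \<noteq> v" by (metis T_self nat.distinct(1))
  then obtain w where w: "badj v w" "T u w + 1 = T u v" using toward_exists Suc.prems by metis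
  have "T u w = m" using w(2) Suc.hyps(2) by simp
  then have "(u,w) \<in> RR ^^ m" using Suc.hyps(1)[of w] Suc.prems badj_nodes[OF w(1)] by simp
  moreover have "(w,v) \<in> RR" using w badj_sym by auto
  ultimately show ?case using Suc.hyps(2) w(2) by (metis add.commute plus_1_eq_Suc relpow_Suc_I)
qed

lemma ndist_T: "u \<in> bnodes \<Longrightarrow> v \<in> bnodes \<Longrightarrow> ndist u v = T u v"
  unfolding ndist_def by (rule Least_equality) (auto intro: T_relpow dest: relpow_T)



definition sel :: "bool \<Rightarrow> nat list \<times> nat list \<Rightarrow> nat list" where
  "sel b A = (if b then snd A else fst A)"

definition shape :: "nat list \<times> nat list \<Rightarrow> nat list \<times> nat list \<Rightarrow> bool \<Rightarrow> bool \<Rightarrow> nat \<Rightarrow> bool" where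
  "shape A B i j m \<longleftrightarrow> T (sel i A) (sel j B) = m \<and> T (sel i A) (sel (\<not>j) B) = Suc m
     \<and> T (sel (\<not>i) A) (sel j B) = Suc m \<and> T (sel (\<not>i) A) (sel (\<not>j) B) = Suc (Suc m)"

definition tp :: "bool \<Rightarrow> bool \<Rightarrow> nat" where
  "tp i j = (if i then (if j then 2 else 1) else (if j then 3 else 4))"

lemma oedgeD: "A \<in> oedges \<Longrightarrow> badj (fst A) (snd A) \<and> fst A \<in> bnodes \<and> snd A \<in> bnodes"
  unfolding oedges_def using badj_nodes by (cases A) auto

lemma badj_ne: "badj a b \<Longrightarrow> a \<noteq> b" unfolding badj_def by auto

lemma saddle:
  assumes a: "badj a0 a1" and b: "badj b0 b1" and e: "T a0 b0 = m" "T a1 b1 = m" "T a0 b1 = Suc m" "T a1 b0 = Suc m"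
  shows "m = 0"
proof (rule ccontr)
  assume m: "m \<noteq> 0"
  have nodes: "a0 \<in> bnodes" "b0 \<in> bnodes" "a1 \<in> bnodes" "b1 \<in> bnodes" using a b badj_nodes by auto
  have e': "T b0 a0 = m" "T b1 a1 = m" "T b1 a0 = Suc m" "T b0 a1 = Suc m"
    using e(1) T_sym[of a0 b0] e(2) T_sym[of a1 b1] e(3) T_sym[of a0 b1] e(4) T_sym[of a1 b0] by simp_all
  have "b0 \<noteq> a0" using e(1) m by auto
  then obtain t where t: "badj a0 t" "T b0 t + 1 = T b0 a0" using toward_exists[OF nodes(1,2)] by blast
  have "T t b0 = T t b1 + 1 \<or> T t b1 = T t b0 + 1" using badj_T[OF b] .
  then have "T b1 t \<le> T b0 t + 1" using T_sym[of t b0] T_sym[of t b1] by auto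
  then have "T b1 t < T b1 a0" using t(2) e' by simp
  moreover have "T b1 a1 < T b1 a0" using e' by simp
  ultimately have "t = a1" using toward_unique[OF t(1) a] by blast
  then show False using t(2) e' by simp
qed

lemma same_edge_cases:
  assumes "A \<in> oedges" "B \<in> oedges" "same_edge A B" shows "B = A \<or> B = orev A"
proof -
  have "fst A \<noteq> snd A" "fst B \<noteq> snd B" using assms oedgeD badj_ne by blast+
  then show ?thesis using assms(3) unfolding same_edge_def orev_def doubleton_eq_iff
    by (cases A; cases B) auto
qed

lemma T_le1: "A \<in> oedges \<Longrightarrow> T (sel p A) (sel q A) \<le> 1"
  using oedgeD[of A] badj_T1[of "fst A" "snd A"] T_sym[of "fst A" "snd A"] by (auto simp: sel_def)

lemma sel_orev: "sel q (orev A) = sel (\<not>q) A" unfolding sel_def orev_def by auto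

lemma shape_not_same:
  assumes "A \<in> oedges" "B \<in> oedges" "shape A B i j m" shows "\<not> same_edge A B"
proof
  assume "same_edge A B"
  then have "B = A \<or> B = orev A" using same_edge_cases assms by blast
  then show False
  proof
    assume "B = A" then show False using assms(3) T_le1[OF assms(1), of "\<not>i" "\<not>j"] unfolding shape_def by simp
  next
    assume "B = orev A" then show False using assms(3) T_le1[OF assms(1), of "\<not>i" "j"] by (simp add: shape_def sel_orev)
  qed
qed

lemma ar4:
  fixes Ma Mb Mc Md :: nat
  assumes r1: "Ma = Mc + 1 \<or> Mc = Ma + 1" and r2: "Mb = Md + 1 \<or> Md = Mb + 1"
      and r3: "Ma = Mb + 1 \<or> Mb = Ma + 1" and r4: "Mc = Md + 1 \<or> Md = Mc + 1"
      and s1: "\<not> (Ma = Md \<and> Mb = Suc Ma \<and> Mc = Suc Ma)"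
      and s2: "\<not> (Mb = Mc \<and> Ma = Suc Mb \<and> Md = Suc Mb)"
  shows "(Mb = Suc Ma \<and> Mc = Suc Ma \<and> Md = Suc (Suc Ma)) \<or>
         (Ma = Suc Mb \<and> Md = Suc Mb \<and> Mc = Suc (Suc Mb)) \<or>
         (Md = Suc Mc \<and> Ma = Suc Mc \<and> Mb = Suc (Suc Mc)) \<or>
         (Mc = Suc Md \<and> Mb = Suc Md \<and> Ma = Suc (Suc Md))"
  using r1
proof
  assume h1: "Ma = Mc + 1"
  from r3 show ?thesis
  proof
    assume h3: "Ma = Mb + 1"
    from r2 show ?thesis
    proof
      assume "Mb = Md + 1" then show ?thesis using h1 h3 by simp
    next
      assume "Md = Mb + 1" then show ?thesis using h1 h3 s2 by simp
    qed
  next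
    assume h3: "Mb = Ma + 1"
    from r4 show ?thesis
    proof
      assume "Mc = Md + 1" then show ?thesis using h1 h3 r2 by auto
    next
      assume "Md = Mc + 1" then show ?thesis using h1 h3 by simp
    qed
  qed
next
  assume h1: "Mc = Ma + 1"
  from r3 show ?thesis
  proof
    assume h3: "Ma = Mb + 1"
    from r2 show ?thesis
    proof
      assume "Mb = Md + 1" then show ?thesis using h1 h3 r4 by auto
    next
      assume "Md = Mb + 1" then show ?thesis using h1 h3 by simp
    qed
  next
    assume h3: "Mb = Ma + 1"
    from r2 show ?thesis
    proof
      assume "Mb = Md + 1" then show ?thesis using h1 h3 s1 by simp
    next
      assume "Md = Mb + 1" then show ?thesis using h1 h3 by simp
    qed
  qed
qed

lemma shape_exists:
  assumes A: "A \<in> oedges" and B: "B \<in> oedges" and ns: "\<not> same_edge A B"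
  shows "\<exists>i j m. shape A B i j m"
proof -
  obtain a0 a1 where Ae: "A = (a0,a1)" by (cases A)
  obtain b0 b1 where Be: "B = (b0,b1)" by (cases B)
  have a: "badj a0 a1" and b: "badj b0 b1" using oedgeD A B Ae Be by auto
  have r1: "T a0 b0 = T a1 b0 + 1 \<or> T a1 b0 = T a0 b0 + 1" using badj_T[OF a, of b0] T_sym[of b0 a0] T_sym[of b0 a1] by simp
  have r2: "T a0 b1 = T a1 b1 + 1 \<or> T a1 b1 = T a0 b1 + 1" using badj_T[OF a, of b1] T_sym[of b1 a0] T_sym[of b1 a1] by simp
  have r3: "T a0 b0 = T a0 b1 + 1 \<or> T a0 b1 = T a0 b0 + 1" using badj_T[OF b, of a0] by simp
  have r4: "T a1 b0 = T a1 b1 + 1 \<or> T a1 b1 = T a1 b0 + 1" using badj_T[OF b, of a1] by simp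
  have s1: "\<not> (T a0 b0 = T a1 b1 \<and> T a0 b1 = Suc (T a0 b0) \<and> T a1 b0 = Suc (T a0 b0))"
  proof
    assume h: "T a0 b0 = T a1 b1 \<and> T a0 b1 = Suc (T a0 b0) \<and> T a1 b0 = Suc (T a0 b0)"
    have z: "T a0 b0 = 0" by (rule saddle[OF a b refl]) (use h in auto)
    have z2: "T a1 b1 = 0" using h z by linarith
    have "a0 = b0" using z by (rule T_zero)
    moreover have "a1 = b1" using z2 by (rule T_zero)
    ultimately show False using ns Ae Be unfolding same_edge_def by auto
  qed
  have s2: "\<not> (T a0 b1 = T a1 b0 \<and> T a0 b0 = Suc (T a0 b1) \<and> T a1 b1 = Suc (T a0 b1))"
  proof
    assume h: "T a0 b1 = T a1 b0 \<and> T a0 b0 = Suc (T a0 b1) \<and> T a1 b1 = Suc (T a0 b1)"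
    have z: "T a0 b1 = 0" by (rule saddle[OF a badj_sym[OF b] refl]) (use h in auto)
    have z2: "T a1 b0 = 0" using h z by linarith
    have "a0 = b1" using z by (rule T_zero)
    moreover have "a1 = b0" using z2 by (rule T_zero)
    ultimately show False using ns Ae Be unfolding same_edge_def by auto
  qed
  have "shape A B False False (T a0 b0) \<or> shape A B False True (T a0 b1) \<or>
        shape A B True False (T a1 b0) \<or> shape A B True True (T a1 b1)"
    using ar4[OF r1 r2 r3 r4 s1 s2] by (simp add: shape_def sel_def Ae Be)
  then show ?thesis by blast
qed

lemma on_geod_nat: "on_geod x A B \<longleftrightarrow> edist x A + edist x B + 1 = middist A B"
proof -
  have "on_geod x A B \<longleftrightarrow> real (edist x A + edist x B + 1) = real (middist A B)"
    unfolding on_geod_def by simp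
  then show ?thesis by linarith
qed

lemma shape_type:
  assumes A: "A \<in> oedges" and B: "B \<in> oedges" and sh: "shape A B i j m"
  shows "middist A B = Suc m" "pair_type t A B \<longleftrightarrow> t = tp i j"
proof -
  obtain a0 a1 where Ae: "A = (a0,a1)" by (cases A)
  obtain b0 b1 where Be: "B = (b0,b1)" by (cases B)
  have a: "badj a0 a1" and b: "badj b0 b1" using oedgeD A B Ae Be by auto
  have nodes: "a0 \<in> bnodes" "b0 \<in> bnodes" "a1 \<in> bnodes" "b1 \<in> bnodes" using a b badj_nodes by auto
  have ns: "\<not> same_edge A B" using shape_not_same[OF A B sh] .
  have t1: "T a0 a1 = 1" "T a1 a0 = 1" "T b0 b1 = 1" "T b1 b0 = 1" using badj_T1 a b T_sym by metis+
  have nd: "ndist x y = T x y" if "x \<in> {a0,a1,b0,b1}" "y \<in> {a0,a1,b0,b1}" for x y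
    using ndist_T that nodes by auto
  have ed: "edist x (a0,a1) = min (T x a0) (T x a1)" "edist x (b0,b1) = min (T x b0) (T x b1)"
    if "x \<in> {a0,a1,b0,b1}" for x
    using that by (auto simp: edist_def nd)
  have md: "middist A B = 1 + min (min (T a0 b0) (T a0 b1)) (min (T a1 b0) (T a1 b1))"
    using ns by (simp add: middist_def ed Ae Be)
  have sh': "T (sel i A) (sel j B) = m" "T (sel i A) (sel (\<not>j) B) = Suc m"
     "T (sel (\<not>i) A) (sel j B) = Suc m" "T (sel (\<not>i) A) (sel (\<not>j) B) = Suc (Suc m)"
    using sh unfolding shape_def by auto
  show mdv: "middist A B = Suc m" unfolding md using sh' by (cases i; cases j) (auto simp: sel_def Ae Be)
  have ogm: "on_geod x A B \<longleftrightarrow> edist x (a0,a1) + edist x (b0,b1) = m" for x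
    unfolding on_geod_nat mdv using Ae Be by simp
  have sy: "T b0 a0 = T a0 b0" "T b0 a1 = T a1 b0" "T b1 a0 = T a0 b1" "T b1 a1 = T a1 b1"
    using T_sym by blast+
  have og1: "on_geod a1 A B \<longleftrightarrow> min (T a1 b0) (T a1 b1) = m" unfolding ogm by (simp add: ed)
  have og0: "on_geod a0 A B \<longleftrightarrow> min (T a0 b0) (T a0 b1) = m" unfolding ogm by (simp add: ed)
  have og2: "on_geod b0 A B \<longleftrightarrow> min (T a0 b0) (T a1 b0) = m" unfolding ogm by (simp add: ed sy)
  have og3: "on_geod b1 A B \<longleftrightarrow> min (T a0 b1) (T a1 b1) = m" unfolding ogm by (simp add: ed sy)
  have pt: "pair_type t A B \<longleftrightarrow> (t = 1 \<and> on_geod a1 A B \<and> on_geod b0 A B) \<or> (t = 2 \<and> on_geod a1 A B \<and> on_geod b1 A B)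
     \<or> (t = 3 \<and> on_geod a0 A B \<and> on_geod b1 A B) \<or> (t = 4 \<and> on_geod a0 A B \<and> on_geod b0 A B)"
    unfolding pair_type_def mdv using Ae Be by simp
  show "pair_type t A B \<longleftrightarrow> t = tp i j"
    unfolding pt og0 og1 og2 og3 using sh' by (cases i; cases j) (auto simp: sel_def Ae Be tp_def)
qed



lemma oedge_sel: "A \<in> oedges \<Longrightarrow> badj (sel i A) (sel (\<not>i) A)"
  using oedgeD[of A] badj_sym by (cases i) (auto simp: sel_def)

lemma sel_nodes: "A \<in> oedges \<Longrightarrow> sel i A \<in> bnodes"
  using oedgeD[of A] by (cases i) (auto simp: sel_def)

lemma sel_pair[simp]: "sel False (a,b) = a" "sel True (a,b) = b" by (auto simp: sel_def)

lemma pred_orev: "shape A B i j m \<Longrightarrow> shape A (orev B) i (\<not>j) m"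
  unfolding shape_def sel_orev by simp

lemma pred_up:
  assumes A: "A \<in> oedges" and B: "B \<in> oedges" and sh: "shape A B i True m"
    and w: "badj (fst B) w" "w \<noteq> snd B"
  shows "shape A (w, fst B) i True (Suc m)"
proof -
  define y where "y = sel i A"
  define x where "x = sel (\<not>i) A"
  have b: "badj (fst B) (snd B)" using oedgeD[OF B] by simp
  have e: "T y (snd B) = m" "T y (fst B) = Suc m" "T x (snd B) = Suc m" "T x (fst B) = Suc (Suc m)"
    using sh unfolding shape_def x_def y_def sel_def by auto
  have up: "T z w = T z (fst B) + 1" if "T z (snd B) < T z (fst B)" for z
  proof -
    have "T z (fst B) = T z w + 1 \<or> T z w = T z (fst B) + 1" using badj_T[OF w(1)] .
    moreover have "\<not> T z w < T z (fst B)"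
      using toward_unique[OF w(1) b _ that] w(2) by blast
    ultimately show ?thesis by linarith
  qed
  have "T y w = Suc (Suc m)" "T x w = Suc (Suc (Suc m))" using up[of y] up[of x] e by auto
  then show ?thesis using e unfolding shape_def x_def y_def sel_def by auto
qed

lemma pred_dn:
  assumes A: "A \<in> oedges" and B: "B \<in> oedges" and sh: "shape A B i False m"
  shows "\<exists>t. badj (fst B) t \<and> t \<noteq> snd B \<and> (m = 0 \<longrightarrow> t = sel (\<not>i) A \<and> fst B = sel i A)
     \<and> (m \<noteq> 0 \<longrightarrow> shape A (t, fst B) i False (m - 1))
     \<and> (\<forall>w. badj (fst B) w \<and> w \<noteq> snd B \<and> w \<noteq> t \<longrightarrow> shape A (w, fst B) i True m)"
proof -
  define y where "y = sel i A"
  define x where "x = sel (\<not>i) A"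
  have b: "badj (fst B) (snd B)" and b0: "fst B \<in> bnodes" using oedgeD[OF B] by auto
  have yx: "badj y x" unfolding x_def y_def using oedge_sel[OF A] .
  have xn: "x \<in> bnodes" unfolding x_def using sel_nodes[OF A] .
  have e: "T y (fst B) = m" "T y (snd B) = Suc m" "T x (fst B) = Suc m" "T x (snd B) = Suc (Suc m)"
    using sh unfolding shape_def x_def y_def sel_def by auto
  have "x \<noteq> fst B" using e(3) by auto
  then obtain t where t: "badj (fst B) t" "T x t + 1 = T x (fst B)"
    using toward_exists[OF b0 xn] by blast
  have xt: "T x t = m" using t(2) e(3) by simp
  have tb: "t \<noteq> snd B" using xt e(4) by auto
  have c0: "m = 0 \<longrightarrow> t = x \<and> fst B = y"
  proof
    assume "m = 0"
    then show "t = x \<and> fst B = y" using xt e(1) T_zero by (metis)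
  qed
  have c1: "m \<noteq> 0 \<longrightarrow> shape A (t, fst B) i False (m - 1)"
  proof
    assume m: "m \<noteq> 0"
    have "T y (fst B) = T y t + 1 \<or> T y t = T y (fst B) + 1" using badj_T[OF t(1)] .
    moreover have "T y t \<noteq> Suc m"
    proof
      assume "T y t = Suc m"
      then have "m = 0" using saddle[OF yx t(1) e(1) xt _ e(3)] by simp
      with m show False by simp
    qed
    ultimately have "T y t = m - 1" using e(1) by linarith
    then show "shape A (t, fst B) i False (m - 1)"
      using e xt m unfolding shape_def by (simp add: x_def[symmetric] y_def[symmetric])
  qed
  have c2: "shape A (w, fst B) i True m" if w: "badj (fst B) w" "w \<noteq> snd B" "w \<noteq> t" for w
  proof -
    have "T x (fst B) = T x w + 1 \<or> T x w = T x (fst B) + 1" using badj_T[OF w(1)] .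
    moreover have "\<not> T x w < T x (fst B)"
      using toward_unique[OF w(1) t(1) _] t(2) w(3) by force
    ultimately have xw: "T x w = Suc (Suc m)" using e(3) by linarith
    have "T y (fst B) = T y w + 1 \<or> T y w = T y (fst B) + 1" using badj_T[OF w(1)] .
    moreover have "T w y = T w x + 1 \<or> T w x = T w y + 1" using badj_T[OF yx] .
    ultimately have "T y w = Suc m" using xw e(1) T_sym[of w y] T_sym[of w x] by linarith
    then show ?thesis using e xw unfolding shape_def by (simp add: x_def[symmetric] y_def[symmetric])
  qed
  show ?thesis using t(1) tb c0 c1 c2 unfolding x_def y_def by blast
qed

lemma z_same:
  assumes A: "A \<in> oedges" and w: "badj (fst A) w" "w \<noteq> snd A"
  shows "shape A (w, fst A) False True 0"
proof -
  have a: "badj (fst A) (snd A)" using oedgeD[OF A] by simp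
  have "T (snd A) (fst A) = T (snd A) w + 1 \<or> T (snd A) w = T (snd A) (fst A) + 1" using badj_T[OF w(1)] .
  moreover have "T (snd A) (fst A) = 1" using badj_T1[OF a] T_sym by metis
  moreover have "T (snd A) w \<noteq> 0" using w(2) T_zero by metis
  ultimately have "T (snd A) w = 2" by linarith
  then show ?thesis using badj_T1[OF w(1)] badj_T1[OF a] T_sym[of "snd A" "fst A"] unfolding shape_def sel_def by auto
qed

lemma z_rev:
  assumes A: "A \<in> oedges" and w: "badj (snd A) w" "w \<noteq> fst A"
  shows "shape A (w, snd A) True True 0"
proof -
  have a: "badj (fst A) (snd A)" using oedgeD[OF A] by simp
  have "T (fst A) (snd A) = T (fst A) w + 1 \<or> T (fst A) w = T (fst A) (snd A) + 1" using badj_T[OF w(1)] .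
  moreover have "T (fst A) (snd A) = 1" using badj_T1[OF a] .
  moreover have "T (fst A) w \<noteq> 0" using w(2) T_zero by metis
  ultimately have "T (fst A) w = 2" by linarith
  then show ?thesis using badj_T1[OF w(1)] badj_T1[OF a] unfolding shape_def sel_def by auto
qed

lemma md0:
  assumes A: "A \<in> oedges"
  shows "middist A A = 0" "middist A (orev A) = 0" "pair_type 1 A A" "pair_type 2 A (orev A)"
    "pair_type 4 A (orev A)"
  by (auto simp: middist_def same_edge_def pair_type_def orev_def)

lemma md0_cases:
  assumes "middist A B = 0" "pair_type t A B"
  shows "((t = 1 \<or> t = 3) \<and> B = A) \<or> ((t = 2 \<or> t = 4) \<and> B = orev A)"
  using assms unfolding pair_type_def by auto

lemma orev_ne: "A \<in> oedges \<Longrightarrow> orev A \<noteq> A"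
  using oedgeD[of A] badj_ne by (cases A) (auto simp: orev_def)

lemma nbr_set:
  assumes v: "v \<in> bnodes"
  shows "{w. badj v w} = (if v = [] then {[0],[1],[2]} else insert (tl v) ((\<lambda>i. i # v) ` ({0,1,2} - {hd v})))"
proof (cases v)
  case Nil
  have "badj [] w \<longleftrightarrow> w \<in> {[0],[1],[2]}" for w
    unfolding badj_def bnodes_def by auto
  then show ?thesis using Nil by auto
next
  case (Cons h t)
  have tn: "t \<in> bnodes" using bnodes_tl[OF v] Cons by simp
  have hs: "h \<in> {0,1,2}" using v Cons unfolding bnodes_def by auto
  have "badj v w \<longleftrightarrow> w = t \<or> (\<exists>i\<in>{0,1,2} - {h}. w = i # v)" for w
  proof
    assume "badj v w"
    then obtain i where w: "w \<in> bnodes" "w = i # v \<or> v = i # w" unfolding badj_def by auto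
    then show "w = t \<or> (\<exists>i\<in>{0,1,2} - {h}. w = i # v)"
    proof (cases "w = i # v")
      case True
      then have "i \<in> {0,1,2}" "i \<noteq> h" using w(1) Cons unfolding bnodes_def by (auto simp: successively_Cons)
      then show ?thesis using True by auto
    next
      case False then show ?thesis using w Cons by auto
    qed
  next
    assume "w = t \<or> (\<exists>i\<in>{0,1,2} - {h}. w = i # v)"
    then show "badj v w"
    proof
      assume "w = t" then show ?thesis using v tn Cons unfolding badj_def by auto
    next
      assume "\<exists>i\<in>{0,1,2} - {h}. w = i # v"
      then obtain i where i: "i \<in> {0,1,2}" "i \<noteq> h" "w = i # v" by auto
      have "w \<in> bnodes" using v i Cons unfolding bnodes_def by (auto simp: successively_Cons)
      then show ?thesis using v i unfolding badj_def by auto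
    qed
  qed
  then show ?thesis using Cons by auto
qed

lemma nbr3:
  assumes v: "v \<in> bnodes" and b: "badj v b"
  shows "\<exists>w1 w2. w1 \<noteq> w2 \<and> w1 \<noteq> b \<and> w2 \<noteq> b \<and> {w. badj v w} = {b, w1, w2}"
proof -
  define N where "N = {w. badj v w}"
  have fin: "finite N" and c3: "card N = 3"
  proof -
    show "finite N" unfolding N_def nbr_set[OF v] by auto
    show "card N = 3"
    proof (cases v)
      case Nil then show ?thesis unfolding N_def nbr_set[OF v] by simp
    next
      case (Cons h t)
      have hs: "h \<in> {0,1,2}" using v Cons unfolding bnodes_def by auto
      have "card ((\<lambda>i. i # v) ` ({0,1,2} - {h})) = card ({0::nat,1,2} - {h})"
        by (rule card_image) (auto simp: inj_on_def)
      also have "\<dots> = 2" using hs by auto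
      finally have c: "card ((\<lambda>i. i # v) ` ({0,1,2} - {h})) = 2" .
      have "t \<notin> (\<lambda>i. i # v) ` ({0,1,2} - {h})" using Cons by auto
      then show ?thesis unfolding N_def nbr_set[OF v] using Cons c by simp
    qed
  qed
  have "b \<in> N" using b N_def by simp
  then have "card (N - {b}) = 2" using fin c3 by simp
  then obtain w1 w2 where "N - {b} = {w1, w2}" "w1 \<noteq> w2" by (auto simp: card_2_iff)
  then have "N = {b, w1, w2}" "w1 \<noteq> b" "w2 \<noteq> b" using \<open>b \<in> N\<close> by blast+
  then show ?thesis using \<open>w1 \<noteq> w2\<close> N_def by blast
qed

lemma Gk_split:
  assumes B: "B \<in> oedges" and N: "{w. badj (fst B) w} = {snd B, w1, w2}"
    and d: "w1 \<noteq> w2" "w1 \<noteq> snd B" "w2 \<noteq> snd B"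
  shows "Gk (Suc k) B A = -1/3 * Gk k (orev B) A + 2/3 * Gk k (w1, fst B) A + 2/3 * Gk k (w2, fst B) A"
proof -
  define F where "F = {(snd B, fst B), (w1, fst B), (w2, fst B)}"
  define f where "f = (\<lambda>C. G1 B C * Gk k C A)"
  have Fo: "F \<subseteq> oedges"
  proof -
    have "badj w (fst B)" if "w \<in> {snd B, w1, w2}" for w using that N badj_sym by blast
    then show ?thesis unfolding F_def oedges_def by auto
  qed
  have z: "f C = 0" if "C \<in> oedges - F" for C
  proof -
    have "G1 B C = 0"
    proof (rule ccontr)
      assume "G1 B C \<noteq> 0"
      then have "B = orev C \<or> snd C = fst B" unfolding G1_def follows_def by (auto split: if_splits)
      then show False
      proof
        assume "B = orev C"
        then have "C = (snd B, fst B)" unfolding orev_def by auto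
        then show False using that F_def by auto
      next
        assume s: "snd C = fst B"
        have "badj (fst C) (snd C)" using that unfolding oedges_def by auto
        then have "fst C \<in> {snd B, w1, w2}" using N s badj_sym by auto
        then have "C \<in> F" using s unfolding F_def by (cases C) auto
        then show False using that by auto
      qed
    qed
    then show ?thesis unfolding f_def by simp
  qed
  have "Gk (Suc k) B A = infsum f oedges" unfolding f_def by simp
  also have "\<dots> = infsum f F" by (rule infsum_cong_neutral) (use Fo z in auto)
  also have "\<dots> = sum f F" by (rule infsum_finite) (simp add: F_def)
  also have "\<dots> = f (snd B, fst B) + f (w1, fst B) + f (w2, fst B)"
    unfolding F_def using d by simp
  also have "\<dots> = -1/3 * Gk k (orev B) A + 2/3 * Gk k (w1, fst B) A + 2/3 * Gk k (w2, fst B) A"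
    unfolding f_def G1_def follows_def orev_def using d by (cases B) auto
  finally show ?thesis .
qed



definition qq :: complex where "qq = complex_of_real (sqrt 2)"
lemma qq_sq: "qq^2 = 2" unfolding qq_def by (simp flip: of_real_power)
lemma qq_nz: "qq \<noteq> 0" unfolding qq_def by simp

lemma rr_sq: "(complex_of_real rr)^2 = 2/9"
  unfolding rr_def by (simp add: power_divide flip: of_real_power)

lemma one_plus_csqrt_nz: "1 + csqrt w \<noteq> 0"
proof
  assume "1 + csqrt w = 0"
  then have "csqrt w = -1" by (simp add: add_eq_0_iff)
  then have "Re (csqrt w) = -1" by (simp del: Re_csqrt)
  with Re_csqrt[of w] show False by linarith
qed

definition den :: "complex \<Rightarrow> complex" where "den x = 1 + x^2 / (complex_of_real rr)^2"

lemma mu_den: "mu x = 2*x / den x" unfolding mu_def den_def by simp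

lemma zminus_alt: "zminus m = 2*m / (1 + csqrt (1 - 4*m^2))"
proof -
  have nz: "1 + csqrt (1 - 4*m^2) \<noteq> 0" by (rule one_plus_csqrt_nz)
  show ?thesis
  proof (cases "m = 0")
    case True then show ?thesis by (simp add: zminus_def)
  next
    case False
    have "(1 - csqrt (1 - 4*m^2)) * (1 + csqrt (1 - 4*m^2)) = 4*m^2"
      by (simp add: algebra_simps power2_eq_square[symmetric])
    then show ?thesis using False nz unfolding zminus_def
      by (simp add: field_simps power2_eq_square)
  qed
qed

lemma zminus_rel: "zminus m = m * (1 + (zminus m)^2)"
proof -
  define s where "s = csqrt (1 - 4*m^2)"
  have s2: "s^2 = 1 - 4*m^2" unfolding s_def by simp
  have nz: "1 + s \<noteq> 0" unfolding s_def by (rule one_plus_csqrt_nz)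
  have "zminus m = 2*m/(1+s)" unfolding s_def by (rule zminus_alt)
  then show ?thesis using nz s2 by (simp add: field_simps) algebra
qed

lemma Zf_rel: assumes "den x \<noteq> 0" shows "(1 + 9/2*x^2) * Zf x = 2*x*(1 + (Zf x)^2)"
proof -
  have d: "den x = 1 + 9/2*x^2" unfolding den_def rr_sq by simp
  have "Zf x = mu x * (1 + (Zf x)^2)" unfolding Zf_def by (rule zminus_rel)
  then show ?thesis using assms unfolding mu_den d by (simp add: field_simps)
qed

lemma Zf_0: "Zf 0 = 0" unfolding Zf_def mu_def zminus_def by simp
lemma Dd_0: "Dd 0 = 1" unfolding Dd_def by (simp add: Zf_0)

definition S1 :: "complex set" where "S1 = {x. den x \<noteq> 0}"
definition S2 :: "complex set" where "S2 = S1 \<inter> (\<lambda>x. 1 - 4*(mu x)^2) -` (- \<real>\<^sub>\<le>\<^sub>0)"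
definition Om :: "complex set" where "Om = S2 \<inter> Dd -` (- {0})"

lemma open_S1: "open S1"
  unfolding S1_def den_def using rr_sq by (intro open_Collect_neq continuous_intros) auto

lemma mu_holo: "mu holomorphic_on S1"
proof -
  have "(\<lambda>x. 2*x / den x) holomorphic_on S1"
    unfolding S1_def den_def by (intro holomorphic_intros) auto
  then show ?thesis by (simp add: mu_den[abs_def])
qed

lemma open_S2: "open S2"
  unfolding S2_def
  by (intro continuous_open_preimage open_S1 holomorphic_on_imp_continuous_on holomorphic_intros mu_holo)
     (auto simp: open_Compl)

lemma Zf_eq: "Zf = (\<lambda>x. 2 * mu x / (1 + csqrt (1 - 4*(mu x)^2)))"
  unfolding Zf_def by (rule ext, rule zminus_alt)



lemma Zf_holo: "Zf holomorphic_on S2"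
proof -
  have m: "mu holomorphic_on S2" using mu_holo holomorphic_on_subset S2_def by blast
  show ?thesis unfolding Zf_eq
    by (intro holomorphic_intros m one_plus_csqrt_nz) (auto simp: S2_def)
qed

lemma Dd_holo: "Dd holomorphic_on S2"
proof -
  have "(\<lambda>x. (1 - 5/2 * x * Zf x)^2 - x^2 / 2 * (Zf x)^4) holomorphic_on S2"
    by (intro holomorphic_intros Zf_holo) auto
  then show ?thesis by (simp add: Dd_def[abs_def])
qed

lemma open_Om: "open Om"
  unfolding Om_def
  by (intro continuous_open_preimage open_S2 holomorphic_on_imp_continuous_on Dd_holo) auto

lemma zero_Om: "0 \<in> Om"
  by (simp add: Om_def S2_def S1_def den_def mu_def Dd_0)

lemma Om_S2: "Om \<subseteq> S2" unfolding Om_def by auto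
lemma Om_den: "x \<in> Om \<Longrightarrow> den x \<noteq> 0" unfolding Om_def S2_def S1_def by auto
lemma Om_Dd: "x \<in> Om \<Longrightarrow> Dd x \<noteq> 0" unfolding Om_def by auto

lemma Zf_holo_Om: "Zf holomorphic_on Om" using Zf_holo Om_S2 holomorphic_on_subset by blast
lemma Dd_holo_Om: "Dd holomorphic_on Om" using Dd_holo Om_S2 holomorphic_on_subset by blast

lemma g2_holo: "g2 holomorphic_on Om"
proof -
  have "(\<lambda>x. - (Zf x / (2 * complex_of_real (sqrt 2))) * (1 - 5/2 * x * Zf x + x^2/2 * (Zf x)^2) / Dd x) holomorphic_on Om"
    by (intro holomorphic_intros Zf_holo_Om Dd_holo_Om) (auto simp: Om_Dd)
  then show ?thesis by (simp add: g2_def[abs_def])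
qed

lemma g3_holo: "g3 holomorphic_on Om"
proof -
  have "(\<lambda>x. x * Zf x / 4 * (1 - 5/2 * x * Zf x + (Zf x)^2) / Dd x) holomorphic_on Om"
    by (intro holomorphic_intros Zf_holo_Om Dd_holo_Om) (auto simp: Om_Dd)
  then show ?thesis by (simp add: g3_def[abs_def])
qed

lemma g3_0: "g3 0 = 0" by (simp add: g3_def)
lemma g2_0: "g2 0 = 0" by (simp add: g2_def Zf_0)

context
  fixes x :: complex assumes xO: "x \<in> Om"
begin
lemma rel_x: "(1 + 9/2*x^2) * Zf x = 2*x*(1 + (Zf x)^2)" using Zf_rel Om_den xO by blast
lemma DdE: "Dd x = (1 - 5/2*x*Zf x)^2 - x^2/2*(Zf x)^4" by (simp add: Dd_def)

lemma I2: "qq/3 * g2 x = x*(-(1+g3 x)/3 + 4*(1/qq)/3*g2 x*Zf x)"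
  using Om_Dd[OF xO] qq_nz unfolding g2_def g3_def qq_def[symmetric]
  apply (simp add: field_simps) using qq_sq rel_x DdE by algebra
lemma I3: "qq/3 * g3 x = x*(-g2 x/3 + 4*(1/qq)/3*g3 x*Zf x)"
  using Om_Dd[OF xO] qq_nz unfolding g2_def g3_def qq_def[symmetric]
  apply (simp add: field_simps) using qq_sq rel_x DdE by algebra
lemma I1: "qq/3*(1/qq) * (1+g3 x)*Zf x = x*((1/qq)/3*g2 x*Zf x + 2/3*(1+g3 x))"
  using Om_Dd[OF xO] qq_nz unfolding g2_def g3_def qq_def[symmetric]
  apply (simp add: field_simps) using qq_sq rel_x DdE by algebra
lemma I4: "qq/3*(1/qq) * g2 x*Zf x = x*((1/qq)/3*g3 x*Zf x + 2/3*g2 x)"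
  using Om_Dd[OF xO] qq_nz unfolding g2_def g3_def qq_def[symmetric]
  apply (simp add: field_simps) using qq_sq rel_x DdE by algebra
lemma E1: "g4 x = g2 x"
  using Om_Dd[OF xO] qq_nz unfolding g2_def g4_def qq_def[symmetric]
  apply (simp add: field_simps) using qq_sq rel_x DdE by algebra
lemma E2: "x \<noteq> 0 \<Longrightarrow> g1raw x = 1 + g3 x"
  using Om_Dd[OF xO] qq_nz unfolding g1raw_def g3_def qq_def[symmetric]
  apply (simp add: field_simps) using qq_sq rel_x DdE by algebra
end

lemma g1_0: "g1 0 = 1"
proof -
  have c: "continuous (at 0) g3"
    using g3_holo open_Om zero_Om holomorphic_on_imp_continuous_on continuous_on_eq_continuous_at by blast
  have ev: "eventually (\<lambda>x. 1 + g3 x = g1raw x) (at (0::complex))"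
  proof -
    have "eventually (\<lambda>x. x \<in> Om) (at (0::complex))"
      using open_Om zero_Om eventually_at_topological by blast
    moreover have "eventually (\<lambda>x. x \<noteq> 0) (at (0::complex))" by (simp add: eventually_at_filter)
    ultimately show ?thesis by eventually_elim (simp add: E2)
  qed
  have "((\<lambda>x. 1 + g3 x) \<longlongrightarrow> 1 + g3 0) (at 0)"
    using c by (intro tendsto_intros) (simp add: continuous_at)
  then have "(g1raw \<longlongrightarrow> 1) (at 0)" using ev g3_0 by (simp add: tendsto_cong)
  then have "Lim (at 0) g1raw = 1" by (intro tendsto_Lim) auto
  then show ?thesis by (simp add: g1_def)
qed



definition Gn :: "nat \<Rightarrow> complex \<Rightarrow> complex" where
  "Gn t = (if t = 1 then (\<lambda>x. 1 + g3 x) else if t = 3 then g3 else g2)"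
definition P :: "nat \<Rightarrow> nat \<Rightarrow> complex \<Rightarrow> complex" where
  "P t d = (\<lambda>x. Gn t x * Zf x ^ d)"
definition cc :: "nat \<Rightarrow> nat \<Rightarrow> nat \<Rightarrow> complex" where
  "cc t k d = complex_of_real (rr^k * (1/sqrt 2)^d / fact k) * (deriv^^k) (P t d) 0"

lemma ring_helper:
  fixes a b L R W c :: complex
  assumes "a = b" "L = a * W + c" "b * W + c = R" shows "L = R"
  using assms by simp

lemma Gn1: "Gn 1 = (\<lambda>x. 1 + g3 x)" and Gn2: "Gn 2 = g2" and Gn3: "Gn 3 = g3"
  by (auto simp: Gn_def)

lemma Gn_holo: "Gn t holomorphic_on Om"
  unfolding Gn_def using g2_holo g3_holo by (auto intro!: holomorphic_intros)
lemma P_holo: "P t d holomorphic_on Om"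
  unfolding P_def by (intro holomorphic_intros Gn_holo Zf_holo_Om)

lemma gfun_eq:
  assumes "j \<in> {1,2,3,4}"
  shows "(deriv^^k) (\<lambda>x. gfun j x * Zf x ^ d) 0 = (deriv^^k) (P j d) 0"
proof (rule higher_deriv_cong_ev)
  have "\<forall>\<^sub>F x in nhds 0. x \<in> Om" using open_Om zero_Om eventually_nhds_in_open by blast
  then show "\<forall>\<^sub>F x in nhds 0. gfun j x * Zf x ^ d = P j d x"
  proof eventually_elim
    case (elim x)
    have "gfun j x = Gn j x"
    proof -
      consider "j = 1" | "j = 2" | "j = 3" | "j = 4" using assms by auto
      then show ?thesis
      proof cases
        case 1
        then show ?thesis
          by (cases "x = 0") (auto simp: gfun_def Gn_def g1_0 g3_0, simp add: g1_def E2[OF elim])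
      next
        case 4 then show ?thesis by (auto simp: gfun_def Gn_def E1[OF elim])
      qed (auto simp: gfun_def Gn_def)
    qed
    then show ?case by (simp add: P_def)
  qed
qed simp

lemma CO:
  assumes f: "f holomorphic_on Om" and H: "H holomorphic_on Om"
    and eq: "\<And>x. x \<in> Om \<Longrightarrow> c * f x = a + x * H x"
  shows "c * (deriv^^Suc k) f 0 = of_nat (Suc k) * (deriv^^k) H 0"
proof -
  have "c * (deriv^^Suc k) f 0 = (deriv^^Suc k) (\<lambda>x. c * f x) 0"
    by (rule higher_deriv_cmult[OF f zero_Om open_Om, symmetric])
  also have "\<dots> = (deriv^^Suc k) (\<lambda>x. a + x * H x) 0"
    by (rule higher_deriv_cong_ev)
       (use eventually_nhds_in_open[OF open_Om zero_Om] in \<open>auto elim!: eventually_mono simp: eq\<close>)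
  also have "\<dots> = (deriv^^Suc k) (\<lambda>x. a) 0 + (deriv^^Suc k) (\<lambda>x. x * H x) 0"
    by (rule higher_deriv_add) (auto intro!: holomorphic_intros H open_Om zero_Om)
  also have "(deriv^^Suc k) (\<lambda>x. x * H x) 0 =
      (\<Sum>i = 0..Suc k. of_nat (Suc k choose i) * (deriv ^^ i) (\<lambda>x. x) 0 * (deriv ^^ (Suc k - i)) H 0)"
    by (rule higher_deriv_mult) (auto intro!: holomorphic_intros H open_Om zero_Om)
  also have "\<dots> = (\<Sum>i \<in> {1}. of_nat (Suc k choose i) * (deriv ^^ i) (\<lambda>x. x) 0 * (deriv ^^ (Suc k - i)) H 0)"
    by (rule sum.mono_neutral_right) auto
  finally show ?thesis by simp
qed

lemma DLin:
  assumes "f holomorphic_on Om" "g holomorphic_on Om"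
  shows "(deriv^^k) (\<lambda>x. \<alpha> * f x + \<beta> * g x) 0 = \<alpha> * (deriv^^k) f 0 + \<beta> * (deriv^^k) g 0"
proof -
  have "(deriv^^k) (\<lambda>x. \<alpha> * f x + \<beta> * g x) 0 = (deriv^^k) (\<lambda>x. \<alpha> * f x) 0 + (deriv^^k) (\<lambda>x. \<beta> * g x) 0"
    by (rule higher_deriv_add) (auto intro!: holomorphic_intros assms open_Om zero_Om)
  then show ?thesis
    using higher_deriv_cmult[OF assms(1) zero_Om open_Om] higher_deriv_cmult[OF assms(2) zero_Om open_Om] by simp
qed

lemma REC:
  assumes eq: "\<And>x. x \<in> Om \<Longrightarrow> c * P t d x = a + x * (\<alpha> * P t1 d1 x + \<beta> * P t2 d2 x)"
  shows "c * (deriv^^Suc k) (P t d) 0 = of_nat (Suc k) * (\<alpha> * (deriv^^k) (P t1 d1) 0 + \<beta> * (deriv^^k) (P t2 d2) 0)"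
proof -
  have "c * (deriv^^Suc k) (P t d) 0 = of_nat (Suc k) * (deriv^^k) (\<lambda>x. \<alpha> * P t1 d1 x + \<beta> * P t2 d2 x) 0"
    by (rule CO[OF P_holo _ eq]) (auto intro!: holomorphic_intros P_holo)
  then show ?thesis using DLin[OF P_holo P_holo] by simp
qed

lemma rr_qq: "complex_of_real rr = qq/3" unfolding rr_def qq_def by simp
lemma s_qq: "complex_of_real (1/sqrt 2) = 1/qq" unfolding qq_def by simp

lemma cc_alt: "cc t k d = (qq/3)^k * (1/qq)^d / fact k * (deriv^^k) (P t d) 0"
proof -
  have "complex_of_real (rr^k * (1/sqrt 2)^d / fact k) = (qq/3)^k * (1/qq)^d / fact k"
    by (simp add: rr_qq qq_def)
  then show ?thesis unfolding cc_def by simp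
qed

lemma cc_Suc:
  assumes "qq/3 * (deriv^^Suc k) (P t d) 0 = of_nat (Suc k) * Y"
  shows "cc t (Suc k) d = (qq/3)^k * (1/qq)^d / fact k * Y"
proof -
  have "cc t (Suc k) d = (qq/3)^k * (1/qq)^d / fact k * ((qq/3 * (deriv^^Suc k) (P t d) 0) / of_nat (Suc k))"
    unfolding cc_alt[of t "Suc k"] by (simp add: field_simps del: of_nat_Suc funpow.simps)
  then show ?thesis using assms by (simp del: of_nat_Suc funpow.simps)
qed

lemma cc_Suc2:
  assumes "qq/3*(1/qq) * (deriv^^Suc k) (P t (Suc m)) 0 = of_nat (Suc k) * Y"
  shows "cc t (Suc k) (Suc m) = (qq/3)^k * (1/qq)^m / fact k * Y"
proof -
  have "cc t (Suc k) (Suc m) = (qq/3)^k * (1/qq)^m / fact k * ((qq/3*(1/qq) * (deriv^^Suc k) (P t (Suc m)) 0) / of_nat (Suc k))"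
    unfolding cc_alt[of t "Suc k"] by (simp add: field_simps del: of_nat_Suc funpow.simps)
  then show ?thesis using assms by (simp del: of_nat_Suc funpow.simps)
qed

lemma S2: "cc 2 (Suc k) d = -1/3 * cc 1 k d + 4/3 * cc 2 k (Suc d)"
proof -
  have "qq/3 * (deriv^^Suc k) (P 2 d) 0 = of_nat (Suc k) * (-1/3 * (deriv^^k) (P 1 d) 0 + 4*(1/qq)/3 * (deriv^^k) (P 2 (Suc d)) 0)"
  proof (rule REC)
    fix x assume x: "x \<in> Om"
    show "qq/3 * P 2 d x = 0 + x * (-1/3 * P 1 d x + 4*(1/qq)/3 * P 2 (Suc d) x)"
      by (rule ring_helper[OF I2[OF x], where W="Zf x ^ d" and c=0]; unfold P_def Gn1 Gn2 Gn3 power_Suc; algebra)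
  qed
  note cc_Suc[OF this]
  then show ?thesis using qq_nz by (simp add: cc_alt field_simps)
qed

lemma S3: "cc 3 (Suc k) d = -1/3 * cc 2 k d + 4/3 * cc 3 k (Suc d)"
proof -
  have "qq/3 * (deriv^^Suc k) (P 3 d) 0 = of_nat (Suc k) * (-1/3 * (deriv^^k) (P 2 d) 0 + 4*(1/qq)/3 * (deriv^^k) (P 3 (Suc d)) 0)"
  proof (rule REC)
    fix x assume x: "x \<in> Om"
    show "qq/3 * P 3 d x = 0 + x * (-1/3 * P 2 d x + 4*(1/qq)/3 * P 3 (Suc d) x)"
      by (rule ring_helper[OF I3[OF x], where W="Zf x ^ d" and c=0]; unfold P_def Gn1 Gn2 Gn3 power_Suc; algebra)
  qed
  note cc_Suc[OF this]
  then show ?thesis using qq_nz by (simp add: cc_alt field_simps)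
qed

lemma S1': "cc 1 (Suc k) 0 = -1/3 * cc 2 k 0 + 4/3 * cc 3 k 1"
proof -
  have "qq/3 * (deriv^^Suc k) (P 1 0) 0 = of_nat (Suc k) * (-1/3 * (deriv^^k) (P 2 0) 0 + 4*(1/qq)/3 * (deriv^^k) (P 3 1) 0)"
  proof (rule REC)
    fix x assume x: "x \<in> Om"
    show "qq/3 * P 1 0 x = qq/3 + x * (-1/3 * P 2 0 x + 4*(1/qq)/3 * P 3 1 x)"
      by (rule ring_helper[OF I3[OF x], where W=1 and c="qq/3"]; unfold P_def Gn1 Gn2 Gn3 power_Suc; algebra)
  qed
  note cc_Suc[OF this]
  then show ?thesis using qq_nz by (simp add: cc_alt field_simps)
qed

lemma S1: "cc 1 (Suc k) (Suc m) = 1/3 * cc 2 k (Suc m) + 2/3 * cc 1 k m"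
proof -
  have "qq/3*(1/qq) * (deriv^^Suc k) (P 1 (Suc m)) 0 = of_nat (Suc k) * ((1/qq)/3 * (deriv^^k) (P 2 (Suc m)) 0 + 2/3 * (deriv^^k) (P 1 m) 0)"
  proof (rule REC)
    fix x assume x: "x \<in> Om"
    show "qq/3*(1/qq) * P 1 (Suc m) x = 0 + x * ((1/qq)/3 * P 2 (Suc m) x + 2/3 * P 1 m x)"
      by (rule ring_helper[OF I1[OF x], where W="Zf x ^ m" and c=0]; unfold P_def Gn1 Gn2 Gn3 power_Suc; algebra)
  qed
  note cc_Suc2[OF this]
  then show ?thesis using qq_nz by (simp add: cc_alt field_simps)
qed

lemma S4: "cc 2 (Suc k) (Suc m) = 1/3 * cc 3 k (Suc m) + 2/3 * cc 2 k m"
proof -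
  have "qq/3*(1/qq) * (deriv^^Suc k) (P 2 (Suc m)) 0 = of_nat (Suc k) * ((1/qq)/3 * (deriv^^k) (P 3 (Suc m)) 0 + 2/3 * (deriv^^k) (P 2 m) 0)"
  proof (rule REC)
    fix x assume x: "x \<in> Om"
    show "qq/3*(1/qq) * P 2 (Suc m) x = 0 + x * ((1/qq)/3 * P 3 (Suc m) x + 2/3 * P 2 m x)"
      by (rule ring_helper[OF I4[OF x], where W="Zf x ^ m" and c=0]; unfold P_def Gn1 Gn2 Gn3 power_Suc; algebra)
  qed
  note cc_Suc2[OF this]
  then show ?thesis using qq_nz by (simp add: cc_alt field_simps)
qed

lemma cc4: "cc 4 k d = cc 2 k d" unfolding cc_def P_def Gn_def by simp

lemma cc_0: "cc 1 0 0 = 1" "cc 2 0 0 = 0" "cc t 0 (Suc d) = 0"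
  by (auto simp: cc_def P_def Gn_def g3_0 g2_0 Zf_0)



lemma tp_range: "tp i j \<in> {1,2,3,4}" by (auto simp: tp_def)

lemma orev_oedges: "B \<in> oedges \<Longrightarrow> orev B \<in> oedges"
  unfolding oedges_def orev_def using badj_sym by auto

lemma pair_oedges: "badj v w \<Longrightarrow> (w, v) \<in> oedges"
  unfolding oedges_def using badj_sym by auto

lemma main_ind:
  "\<forall>A B t. A \<in> oedges \<longrightarrow> B \<in> oedges \<longrightarrow> t \<in> {1,2,3,4} \<longrightarrow> pair_type t A B
     \<longrightarrow> \<not> (k = 0 \<and> t = 3 \<and> middist A B = 0) \<longrightarrow> complex_of_real (Gk k B A) = cc t k (middist A B)"
proof (induction k)
  case 0
  show ?case
  proof (intro allI impI)
    fix A B t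
    assume A: "A \<in> oedges" and B: "B \<in> oedges" and t: "t \<in> {1,2,3,4}" and pt: "pair_type t A B"
      and ex: "\<not> (0 = 0 \<and> t = 3 \<and> middist A B = 0)"
    show "complex_of_real (Gk 0 B A) = cc t 0 (middist A B)"
    proof (cases "middist A B")
      case 0
      then have "((t = 1 \<or> t = 3) \<and> B = A) \<or> ((t = 2 \<or> t = 4) \<and> B = orev A)" using md0_cases pt by blast
      then show ?thesis using ex 0 orev_ne[OF A] cc_0 cc4 by auto
    next
      case (Suc d)
      then have "B \<noteq> A" using md0(1)[OF A] by auto
      then show ?thesis using Suc cc_0 by simp
    qed
  qed
next
  case (Suc k)
  have IH: "complex_of_real (Gk k B A) = cc t k (middist A B)"
    if "A \<in> oedges" "B \<in> oedges" "t \<in> {1,2,3,4}" "pair_type t A B" "\<not> (k = 0 \<and> t = 3 \<and> middist A B = 0)" for A B t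
    using Suc.IH that by blast
  have IHs: "complex_of_real (Gk k C A) = cc (tp i j) k (Suc m)"
    if "A \<in> oedges" "C \<in> oedges" "shape A C i j m" for A C i j m
  proof -
    have "middist A C = Suc m" "pair_type (tp i j) A C" using shape_type[OF that] by auto
    then show ?thesis using IH[OF that(1,2) tp_range] by simp
  qed
  show ?case
  proof (intro allI impI)
    fix A B t
    assume A: "A \<in> oedges" and B: "B \<in> oedges" and t: "t \<in> {1,2,3,4}" and pt: "pair_type t A B"
    have bn: "fst B \<in> bnodes" "badj (fst B) (snd B)" using oedgeD[OF B] by auto
    obtain w1 w2 where w: "w1 \<noteq> w2" "w1 \<noteq> snd B" "w2 \<noteq> snd B" "{w. badj (fst B) w} = {snd B, w1, w2}"
      using nbr3[OF bn] by blast
    have wb: "badj (fst B) w1" "badj (fst B) w2" using w(4) by blast+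
    have wo: "(w1, fst B) \<in> oedges" "(w2, fst B) \<in> oedges" using pair_oedges wb by auto
    have split: "complex_of_real (Gk (Suc k) B A) = -1/3 * complex_of_real (Gk k (orev B) A)
       + 2/3 * complex_of_real (Gk k (w1, fst B) A) + 2/3 * complex_of_real (Gk k (w2, fst B) A)"
      unfolding Gk_split[OF B w(4) w(1-3)] by simp
    show "complex_of_real (Gk (Suc k) B A) = cc t (Suc k) (middist A B)"
    proof (cases "middist A B = 0")
      case True
      then have "((t = 1 \<or> t = 3) \<and> B = A) \<or> ((t = 2 \<or> t = 4) \<and> B = orev A)" using md0_cases pt by blast
      then show ?thesis
      proof
        assume h: "(t = 1 \<or> t = 3) \<and> B = A"
        then have "B = A" by simp
        have o: "complex_of_real (Gk k (orev B) A) = cc 2 k 0"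
          using IH[OF A orev_oedges[OF A], of 2] md0[OF A] \<open>B = A\<close> by simp
        have "shape A (w, fst A) False True 0" if "w \<in> {w1,w2}" for w
          using z_same[OF A] that wb w \<open>B = A\<close> by auto
        then have "complex_of_real (Gk k (w, fst B) A) = cc 3 k 1" if "w \<in> {w1,w2}" for w
          using IHs[OF A, of "(w, fst A)" False True 0] that wo \<open>B = A\<close> by (auto simp: tp_def)
        then have "complex_of_real (Gk (Suc k) B A) = -1/3 * cc 2 k 0 + 4/3 * cc 3 k 1"
          unfolding split o by simp
        then show ?thesis using h True S1' S3[of k 0] by auto
      next
        assume h: "(t = 2 \<or> t = 4) \<and> B = orev A"
        then have Bo: "B = orev A" by simp
        then have fs: "fst B = snd A" "snd B = fst A" "orev B = A" by (auto simp: orev_def)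
        have o: "complex_of_real (Gk k (orev B) A) = cc 1 k 0"
          using IH[OF A A, of 1] md0[OF A] fs by simp
        have "shape A (w, snd A) True True 0" if "w \<in> {w1,w2}" for w
          using z_rev[OF A] that wb w fs by auto
        then have "complex_of_real (Gk k (w, fst B) A) = cc 2 k 1" if "w \<in> {w1,w2}" for w
          using IHs[OF A, of "(w, snd A)" True True 0] that wo fs by (auto simp: tp_def)
        then have "complex_of_real (Gk (Suc k) B A) = -1/3 * cc 1 k 0 + 4/3 * cc 2 k 1"
          unfolding split o by simp
        then show ?thesis using h True S2[of k 0] cc4 by auto
      qed
    next
      case False
      then have ns: "\<not> same_edge A B" unfolding middist_def by auto
      obtain i j m where sh: "shape A B i j m" using shape_exists[OF A B ns] by blast
      have md: "middist A B = Suc m" and tt: "t = tp i j" using shape_type[OF A B sh] pt by auto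
      have o: "complex_of_real (Gk k (orev B) A) = cc (tp i (\<not>j)) k (Suc m)"
        using IHs[OF A orev_oedges[OF B] pred_orev[OF sh]] .
      show ?thesis
      proof (cases j)
        case True
        have "shape A (w, fst B) i True (Suc m)" if "w \<in> {w1,w2}" for w
          using pred_up[OF A B] sh True that wb w by auto
        then have "complex_of_real (Gk k (w, fst B) A) = cc (tp i True) k (Suc (Suc m))" if "w \<in> {w1,w2}" for w
          using IHs[OF A] that wo by auto
        then have "complex_of_real (Gk (Suc k) B A) = -1/3 * cc (tp i False) k (Suc m) + 4/3 * cc (tp i True) k (Suc (Suc m))"
          unfolding split o using True by simp
        then show ?thesis using md tt True S2 S3 cc4 by (cases i) (auto simp: tp_def)
      next
        case False
        obtain tt' where t': "badj (fst B) tt'" "tt' \<noteq> snd B"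
          "m = 0 \<longrightarrow> tt' = sel (\<not>i) A \<and> fst B = sel i A"
          "m \<noteq> 0 \<longrightarrow> shape A (tt', fst B) i False (m - 1)"
          "\<forall>w. badj (fst B) w \<and> w \<noteq> snd B \<and> w \<noteq> tt' \<longrightarrow> shape A (w, fst B) i True m"
          using pred_dn[OF A B, of i m] sh False by auto
        have tto: "(tt', fst B) \<in> oedges" using pair_oedges t'(1) by auto
        have vt: "complex_of_real (Gk k (tt', fst B) A) = cc (tp i False) k m"
        proof (cases "m = 0")
          case True
          then have e: "(tt', fst B) = (if i then A else orev A)" using t'(3) by (cases i) (auto simp: sel_def orev_def)
          show ?thesis
          proof (cases i)
            case True
            then show ?thesis using e IH[OF A A, of 1] md0[OF A] \<open>m = 0\<close> by (simp add: tp_def)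
          next
            case False
            then show ?thesis using e IH[OF A orev_oedges[OF A], of 4] md0[OF A] \<open>m = 0\<close> by (simp add: tp_def)
          qed
        next
          case False
          then show ?thesis using IHs[OF A tto] t'(4) by (metis Suc_pred' not_gr_zero)
        qed
        have vo: "complex_of_real (Gk k (w, fst B) A) = cc (tp i True) k (Suc m)"
          if "w \<in> {w1,w2}" "w \<noteq> tt'" for w
          using IHs[OF A, of "(w, fst B)" i True m] t'(5) that wb w wo by auto
        have "tt' \<in> {w1, w2}" using t'(1,2) w(4) by blast
        then have "complex_of_real (Gk (Suc k) B A) = -1/3 * cc (tp i True) k (Suc m) + 2/3 * cc (tp i False) k m
              + 2/3 * cc (tp i True) k (Suc m)"
          unfolding split o using False vt vo w(1) by auto
        then show ?thesis using md tt False S1 S4 cc4 by (cases i) (auto simp: tp_def)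
      qed
    qed
  qed
qed


theorem proposition1:
  fixes k d j :: nat and A B :: "nat list \<times> nat list"
  assumes "k \<ge> 1" and "j \<in> {1,2,3,4}"
    and "A \<in> oedges" and "B \<in> oedges"
    and "middist A B = d" and "pair_type j A B"
  shows "complex_of_real (Gk k B A) =
    complex_of_real (rr ^ k * (1 / sqrt 2) ^ d / fact k)
      * (deriv ^^ k) (\<lambda>x. gfun j x * Zf x ^ d) 0"
proof -
  have "complex_of_real (Gk k B A) = cc j k (middist A B)"
    using main_ind[of k, rule_format, OF assms(3) assms(4) assms(2) assms(6)] assms(1) by simp
  then show ?thesis using assms(5) gfun_eq[OF assms(2), of k d] unfolding cc_def by simp
qed

end
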